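(* Let $Q$ be a quiver and $i$ a mutable vertex such that $\mu_i(Q)$ is a fork (resp. an ice fork) with point of return $i$. Then $i$ is cycle-preserving for $Q$.
   Context: A quiver is a finite directed multigraph with no loops and no oriented 2-cycles, whose vertex set is partitioned into mutable and frozen vertices; arrows between two frozen vertices are ignored. $b_{ik}$ = number of arrows $i\to k$ minus number of arrows $k\to i$; $Q|_S$ is the induced subquiver on $S$; $[n]$ denotes the set of mutable vertices. Mutation $\mu_j$ at mutable $j$: for each path $i\to j\to k$ add $b_{ij}b_{jk}$ arrows $i\to k$, reverse all arrows at $j$, cancel 2-cycles. A 3-vertex quiver (or induced subquiver) is an oriented 3-cycle if it has at most one frozen vertex and its underlying directed graph is not acyclic. A mutable vertex $j$ is cycle-preserving for $Q$ if whenever $Q|_{\{i,j,k\}}$ is an oriented 3-cycle containing $j$, $\mu_j(Q)|_{\{i,j,k\}}$ is also an oriented 3-cycle. Abundant: at least 2 arrows between every pair of vertices at least one of which is mutable. $F^+(r)=\{i: r\to i\}$, $F^-(r)=\{j:j\to r\}$. A fork is an abundant non-acyclic quiver with at most one frozen vertex and a vertex $r$ (point of return) such that $b_{ij}>b_{ri}$ and $b_{ij}>b_{jr}$ for all $i\in F^+(r),j\in F^-(r)$, and the subquivers induced on $F^+(r)$ and $F^-(r)$ are acyclic. An ice fork with point of return $r$ is a quiver with mutable vertices $[n]$ and frozen vertices $u_1,\dots,u_m$ ($m\ge1$) such that each $Q|_{[n]\cup\{u_i\}}$ is a fork with point of return $r$. *)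

theory Defs
  imports Main
begin

text \<open>A quiver: a finite vertex set, a subset of mutable vertices (the others are frozen),
  and the skew-symmetric exchange matrix B, where B i k = #arrows i to k minus #arrows k to i.
  Skew-symmetry encodes the absence of loops and oriented 2-cycles.
  Arrows between two frozen vertices are ignored (see qarrows).\<close>

record 'v quiver =
  verts :: "'v set"
  mut :: "'v set"
  B :: "'v \<Rightarrow> 'v \<Rightarrow> int"

definition is_quiver :: "'v quiver \<Rightarrow> bool" where
  "is_quiver Q \<longleftrightarrow> finite (verts Q) \<and> mut Q \<subseteq> verts Q
     \<and> (\<forall>x y. B Q x y = - B Q y x)
     \<and> (\<forall>x y. x \<notin> verts Q \<or> y \<notin> verts Q \<longrightarrow> B Q x y = 0)"

definition qarrows :: "'v quiver \<Rightarrow> 'v set \<Rightarrow> ('v \<times> 'v) set" where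
  "qarrows Q S = {(x, y). x \<in> S \<and> y \<in> S \<and> x \<in> verts Q \<and> y \<in> verts Q
      \<and> (x \<in> mut Q \<or> y \<in> mut Q) \<and> B Q x y > 0}"

definition restrict_quiver :: "'v quiver \<Rightarrow> 'v set \<Rightarrow> 'v quiver" where
  "restrict_quiver Q S =
     \<lparr> verts = verts Q \<inter> S, mut = mut Q \<inter> S,
       B = (\<lambda>x y. if x \<in> S \<and> y \<in> S then B Q x y else 0) \<rparr>"

text \<open>Mutation at j (matrix form of: add b_ij b_jk arrows i to k for every path i to j to k,
  reverse arrows at j, cancel 2-cycles).\<close>
definition mutate :: "'v \<Rightarrow> 'v quiver \<Rightarrow> 'v quiver" where
  "mutate j Q = Q \<lparr> B := (\<lambda>x y. if x = j \<or> y = j then - B Q x y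
        else B Q x y + max (B Q x j) 0 * max (B Q j y) 0
                     - max (- B Q x j) 0 * max (- B Q j y) 0) \<rparr>"

definition oriented_3cycle :: "'v quiver \<Rightarrow> 'v set \<Rightarrow> bool" where
  "oriented_3cycle Q T \<longleftrightarrow> card T = 3 \<and> T \<subseteq> verts Q \<and> card (T - mut Q) \<le> 1
      \<and> \<not> acyclic (qarrows Q T)"

definition cycle_preserving :: "'v quiver \<Rightarrow> 'v \<Rightarrow> bool" where
  "cycle_preserving Q j \<longleftrightarrow> j \<in> mut Q \<and>
     (\<forall>i k. oriented_3cycle Q {i, j, k} \<longrightarrow> oriented_3cycle (mutate j Q) {i, j, k})"

definition abundant :: "'v quiver \<Rightarrow> bool" where
  "abundant Q \<longleftrightarrow> (\<forall>x \<in> verts Q. \<forall>y \<in> verts Q. x \<noteq> y \<and> (x \<in> mut Q \<or> y \<in> mut Q)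
      \<longrightarrow> \<bar>B Q x y\<bar> \<ge> 2)"

definition Fplus :: "'v quiver \<Rightarrow> 'v \<Rightarrow> 'v set" where
  "Fplus Q r = {i. (r, i) \<in> qarrows Q (verts Q)}"

definition Fminus :: "'v quiver \<Rightarrow> 'v \<Rightarrow> 'v set" where
  "Fminus Q r = {j. (j, r) \<in> qarrows Q (verts Q)}"

definition is_fork :: "'v quiver \<Rightarrow> 'v \<Rightarrow> bool" where
  "is_fork Q r \<longleftrightarrow> abundant Q \<and> \<not> acyclic (qarrows Q (verts Q))
      \<and> card (verts Q - mut Q) \<le> 1 \<and> r \<in> verts Q
      \<and> (\<forall>i \<in> Fplus Q r. \<forall>j \<in> Fminus Q r. B Q i j > B Q r i \<and> B Q i j > B Q j r)
      \<and> acyclic (qarrows Q (Fplus Q r)) \<and> acyclic (qarrows Q (Fminus Q r))"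

definition is_ice_fork :: "'v quiver \<Rightarrow> 'v \<Rightarrow> bool" where
  "is_ice_fork Q r \<longleftrightarrow> verts Q - mut Q \<noteq> {}
      \<and> (\<forall>u \<in> verts Q - mut Q. is_fork (restrict_quiver Q (mut Q \<union> {u})) r)"

end

theory Submission
  imports Defs
begin

lemma acyc_rank:
  assumes "\<And>x y. (x,y) \<in> R \<Longrightarrow> f x < (f y::nat)"
  shows "acyclic R"
proof -
  have "(x,y) \<in> R\<^sup>+ \<Longrightarrow> f x < f y" for x y
    by (induction rule: trancl_induct) (auto dest: assms)
  then show ?thesis unfolding acyclic_def by blast
qed
lemma acyc_order:
  assumes q: "is_quiver Q" and d: "x \<noteq> y" "x \<noteq> z" "y \<noteq> z"
    and s: "B Q y x \<le> 0" "B Q z x \<le> 0" "B Q z y \<le> 0"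
  shows "acyclic (qarrows Q {x,y,z})"
proof (rule acyc_rank[where f="\<lambda>u. if u = x then 0 else if u = y then 1 else 2"])
  fix u v assume "(u,v) \<in> qarrows Q {x,y,z}"
  hence uv: "u \<in> {x,y,z}" "v \<in> {x,y,z}" "B Q u v > 0" unfolding qarrows_def by auto
  have sk: "B Q u u = - B Q u u" using q unfolding is_quiver_def by blast
  then have "B Q u u = 0" by linarith
  then show "(if u = x then 0 else if u = y then 1 else 2) < (if v = x then 0 else if v = y then 1 else (2::nat))"
    using uv d s by (auto split: if_splits)
qed

lemma cyc3:
  assumes q: "is_quiver Q" and d: "a \<noteq> i" "a \<noteq> k" "i \<noteq> k"
    and na: "\<not> acyclic (qarrows Q {a,i,k})"
  shows "(B Q a i > 0 \<and> B Q i k > 0 \<and> B Q k a > 0) \<or> (B Q i a > 0 \<and> B Q k i > 0 \<and> B Q a k > 0)"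
proof (rule ccontr)
  assume nc: "\<not> ?thesis"
  have sk: "\<And>x y. B Q x y = - B Q y x" using q unfolding is_quiver_def by blast
  have e1: "{a,i,k} = {a,k,i}" "{a,i,k} = {i,a,k}" "{a,i,k} = {i,k,a}" "{a,i,k} = {k,a,i}" "{a,i,k} = {k,i,a}"
    by auto
  have "(B Q i a \<le> 0 \<and> B Q k a \<le> 0 \<and> B Q k i \<le> 0) \<or> (B Q k a \<le> 0 \<and> B Q i a \<le> 0 \<and> B Q i k \<le> 0)
      \<or> (B Q a i \<le> 0 \<and> B Q k i \<le> 0 \<and> B Q k a \<le> 0) \<or> (B Q k i \<le> 0 \<and> B Q a i \<le> 0 \<and> B Q a k \<le> 0)
      \<or> (B Q a k \<le> 0 \<and> B Q i k \<le> 0 \<and> B Q i a \<le> 0) \<or> (B Q i k \<le> 0 \<and> B Q a k \<le> 0 \<and> B Q a i \<le> 0)"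
    using nc sk[of a i] sk[of i k] sk[of k a] by linarith
  then show False
  proof (elim disjE)
    assume "B Q i a \<le> 0 \<and> B Q k a \<le> 0 \<and> B Q k i \<le> 0"
    then show False using acyc_order[OF q, of a i k] na d by blast
  next
    assume "B Q k a \<le> 0 \<and> B Q i a \<le> 0 \<and> B Q i k \<le> 0"
    then show False using acyc_order[OF q, of a k i] na d e1(1) by metis
  next
    assume "B Q a i \<le> 0 \<and> B Q k i \<le> 0 \<and> B Q k a \<le> 0"
    then show False using acyc_order[OF q, of i a k] na d e1(2) by metis
  next
    assume "B Q k i \<le> 0 \<and> B Q a i \<le> 0 \<and> B Q a k \<le> 0"
    then show False using acyc_order[OF q, of i k a] na d e1(3) by metis
  next
    assume "B Q a k \<le> 0 \<and> B Q i k \<le> 0 \<and> B Q i a \<le> 0"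
    then show False using acyc_order[OF q, of k a i] na d e1(4) by metis
  next
    assume "B Q i k \<le> 0 \<and> B Q a k \<le> 0 \<and> B Q a i \<le> 0"
    then show False using acyc_order[OF q, of k i a] na d e1(5) by metis
  qed
qed

lemma fork_ineq:
  assumes "is_fork R r" "(r,a) \<in> qarrows R (verts R)" "(k,r) \<in> qarrows R (verts R)"
  shows "B R a k > B R r a"
  using assms unfolding is_fork_def Fplus_def Fminus_def by blast

lemma core:
  assumes q: "is_quiver Q" and im: "i \<in> mut Q"
    and f: "is_fork (mutate i Q) i \<or> is_ice_fork (mutate i Q) i"
    and c: "oriented_3cycle Q {a,i,k}"
    and b: "B Q a i > 0" "B Q i k > 0" "B Q k a > 0"
  shows "oriented_3cycle (mutate i Q) {a,i,k}"
proof -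
  let ?Q = "mutate i Q"
  have vm: "verts ?Q = verts Q" "mut ?Q = mut Q" unfolding mutate_def by auto
  have iv: "i \<in> verts Q" using q im unfolding is_quiver_def by blast
  have card: "card {a,i,k} = 3" and sub: "{a,i,k} \<subseteq> verts Q" and fr: "card ({a,i,k} - mut Q) \<le> 1"
    using c unfolding oriented_3cycle_def by auto
  have d: "a \<noteq> i" "a \<noteq> k" "i \<noteq> k" using card by (auto simp: card_insert_if split: if_splits)
  have am: "a \<in> mut Q \<or> k \<in> mut Q"
  proof (rule ccontr)
    assume "\<not> ?thesis"
    hence "{a,k} \<subseteq> {a,i,k} - mut Q" by auto
    hence "card {a,k} \<le> card ({a,i,k} - mut Q)" by (intro card_mono) auto
    with fr d show False by auto
  qed
  have sk: "B Q i a = - B Q a i" "B Q k i = - B Q i k" using q unfolding is_quiver_def by blast+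
  have B1: "B ?Q i a = B Q a i" "B ?Q k i = B Q i k"
    using sk unfolding mutate_def by auto
  have "B ?Q a k > B ?Q i a"
    using f
  proof
    assume F: "is_fork ?Q i"
    show ?thesis
      by (rule fork_ineq[OF F]) (use B1 b sub iv im vm in \<open>auto simp: qarrows_def\<close>)
  next
    assume F: "is_ice_fork ?Q i"
    obtain u where u: "u \<in> verts Q - mut Q" "{a,i,k} \<subseteq> mut Q \<union> {u}"
    proof (cases "a \<in> mut Q")
      case True
      show ?thesis
      proof (cases "k \<in> mut Q")
        case True
        obtain u where "u \<in> verts Q - mut Q" using F vm unfolding is_ice_fork_def by auto
        then show ?thesis using that True \<open>a \<in> mut Q\<close> im by auto
      next
        case False
        then show ?thesis using that True im sub by auto
      qed
    next
      case False
      then show ?thesis using that am im sub by auto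
    qed
    let ?R = "restrict_quiver ?Q (mut Q \<union> {u})"
    have FR: "is_fork ?R i" using F u vm unfolding is_ice_fork_def by auto
    have "B ?R a k > B ?R i a"
      by (rule fork_ineq[OF FR]) (use B1 b sub iv im vm u in \<open>auto simp: qarrows_def restrict_quiver_def\<close>)
    then show ?thesis using u unfolding restrict_quiver_def by auto
  qed
  hence B2: "B ?Q a k > 0" using B1 b by linarith
  have "(i,a) \<in> qarrows ?Q {a,i,k}" "(a,k) \<in> qarrows ?Q {a,i,k}" "(k,i) \<in> qarrows ?Q {a,i,k}"
    using B1 B2 b sub im am vm unfolding qarrows_def by auto
  hence "(i,i) \<in> (qarrows ?Q {a,i,k})\<^sup>+" by (meson trancl.simps)
  hence "\<not> acyclic (qarrows ?Q {a,i,k})" unfolding acyclic_def by blast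
  then show ?thesis using card sub fr vm unfolding oriented_3cycle_def by auto
qed

theorem mainTheorem3:
  fixes Q :: "'v quiver" and i :: 'v
  assumes "is_quiver Q" and "i \<in> mut Q"
    and "is_fork (mutate i Q) i \<or> is_ice_fork (mutate i Q) i"
  shows "cycle_preserving Q i"
  unfolding cycle_preserving_def
proof (intro conjI allI impI)
  show "i \<in> mut Q" by fact
  fix a k assume c: "oriented_3cycle Q {a, i, k}"
  have card: "card {a,i,k} = 3" using c unfolding oriented_3cycle_def by auto
  have d: "a \<noteq> i" "a \<noteq> k" "i \<noteq> k" using card by (auto simp: card_insert_if split: if_splits)
  have e: "{a,i,k} = {k,i,a}" by auto
  have "\<not> acyclic (qarrows Q {a,i,k})" using c unfolding oriented_3cycle_def by auto
  from cyc3[OF assms(1) d this] show "oriented_3cycle (mutate i Q) {a, i, k}"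
  proof
    assume "B Q a i > 0 \<and> B Q i k > 0 \<and> B Q k a > 0"
    then show ?thesis using core[OF assms c] by auto
  next
    assume "B Q i a > 0 \<and> B Q k i > 0 \<and> B Q a k > 0"
    then show ?thesis using core[OF assms, of k a] c e by auto
  qed
qed

end
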